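(* Let $\mathcal{P}_1,\mathcal{P}_2$ be finite posets and let $\mathbf{T}\in\mathbb{R}^{\mathcal{P}_1\times\mathcal{P}_2}$ be a matrix with finite ND rank. Then $\mathrm{NDrank}(\mathbf{T})$ is at least the minimum number $s$ of elements $\mathbf{v}_1,\dots,\mathbf{v}_s\in\mathcal{C}(\mathcal{P}_1)$ needed for $\mathbf{T}(\mathcal{C}(\mathcal{P}_2)^* )\subseteq\mathrm{cone}(\mathbf{v}_1,\dots,\mathbf{v}_s)$.
   Context: For a finite poset $\mathcal{Q}$, the order cone $\mathcal{C}(\mathcal{Q})\subset\mathbb{R}^{\mathcal{Q}}$ is the set of $\mathbf{f}$ with $f_x\ge0$ for all $x$ and $f_x\le f_y$ whenever $x\preceq y$. The dual cone of $\mathcal{C}\subset\mathbb{R}^p$ is $\mathcal{C}^*=\{\mathbf{a}:\mathbf{a}^\intercal\mathbf{x}\ge0\ \forall\mathbf{x}\in\mathcal{C}\}$. The matrix $\mathbf{T}$ acts as a linear map $\mathbb{R}^{\mathcal{P}_2}\to\mathbb{R}^{\mathcal{P}_1}$, and $\mathbf{T}(\mathcal{C}(\mathcal{P}_2)^* )=\{\mathbf{T}\boldsymbol\beta:\boldsymbol\beta\in\mathcal{C}(\mathcal{P}_2)^*\}$. $\mathrm{cone}(\cdot)$ is the conical hull. $\mathrm{NDrank}(\mathbf{T})$ is the minimal $r$ with $\mathbf{T}=\sum_{i=1}^r\mathbf{a}_i\mathbf{b}_i^\intercal$, $\mathbf{a}_i\in\mathcal{C}(\mathcal{P}_1)$,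 $\mathbf{b}_i\in\mathcal{C}(\mathcal{P}_2)$. *)

theory Defs
  imports Complex_Main
begin

text \<open>Finite posets are modelled as finite types with a partial order (class order).
  Vectors in R^P are functions P \<Rightarrow> real; matrices in R^(P1 x P2) are P1 \<Rightarrow> P2 \<Rightarrow> real.\<close>

definition order_cone :: "('a::{finite,order} \<Rightarrow> real) set" where
  "order_cone = {f. (\<forall>x. 0 \<le> f x) \<and> (\<forall>x y. x \<le> y \<longrightarrow> f x \<le> f y)}"

definition dual_cone :: "('a::finite \<Rightarrow> real) set \<Rightarrow> ('a \<Rightarrow> real) set" where
  "dual_cone C = {a. \<forall>x\<in>C. 0 \<le> (\<Sum>i\<in>UNIV. a i * x i)}"

definition matvec :: "('a \<Rightarrow> 'b::finite \<Rightarrow> real) \<Rightarrow> ('b \<Rightarrow> real) \<Rightarrow> ('a \<Rightarrow> real)" where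
  "matvec T \<beta> = (\<lambda>i. \<Sum>j\<in>UNIV. T i j * \<beta> j)"

definition cone_of :: "(nat \<Rightarrow> 'a \<Rightarrow> real) \<Rightarrow> nat \<Rightarrow> ('a \<Rightarrow> real) set" where
  "cone_of v s = {x. \<exists>c. (\<forall>i<s. 0 \<le> c i) \<and> x = (\<lambda>p. \<Sum>i<s. c i * v i p)}"

definition nd_decomp :: "('a::{finite,order} \<Rightarrow> 'b::{finite,order} \<Rightarrow> real) \<Rightarrow> nat \<Rightarrow> bool" where
  "nd_decomp T r = (\<exists>a b. (\<forall>i<r. a i \<in> order_cone \<and> b i \<in> order_cone) \<and>
      T = (\<lambda>x y. \<Sum>i<r. a i x * b i y))"

definition NDrank :: "('a::{finite,order} \<Rightarrow> 'b::{finite,order} \<Rightarrow> real) \<Rightarrow> nat" where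
  "NDrank T = (LEAST r. nd_decomp T r)"

end

theory Submission
  imports Defs
begin

theorem lemma7:
  fixes T :: "'a::{finite,order} \<Rightarrow> 'b::{finite,order} \<Rightarrow> real"
  assumes "\<exists>r. nd_decomp T r"
  shows "(LEAST s. \<exists>v. (\<forall>i<s. v i \<in> (order_cone :: ('a \<Rightarrow> real) set)) \<and>
             matvec T ` dual_cone (order_cone :: ('b \<Rightarrow> real) set) \<subseteq> cone_of v s)
         \<le> NDrank T"
proof -
  have "nd_decomp T (NDrank T)" unfolding NDrank_def using assms by (metis LeastI_ex)
  then obtain a b where ab: "\<forall>i<NDrank T. a i \<in> (order_cone :: ('a \<Rightarrow> real) set) \<and> b i \<in> (order_cone :: ('b \<Rightarrow> real) set)"
    and T: "T = (\<lambda>x y. \<Sum>i<NDrank T. a i x * b i y)"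
    unfolding nd_decomp_def by blast
  have "matvec T ` dual_cone (order_cone :: ('b \<Rightarrow> real) set) \<subseteq> cone_of a (NDrank T)"
  proof
    fix z assume "z \<in> matvec T ` dual_cone (order_cone :: ('b \<Rightarrow> real) set)"
    then obtain \<beta> where \<beta>: "\<beta> \<in> dual_cone (order_cone :: ('b \<Rightarrow> real) set)" and z: "z = matvec T \<beta>" by blast
    define c where "c i = (\<Sum>j\<in>UNIV. \<beta> j * b i j)" for i
    have c0: "\<forall>i<NDrank T. 0 \<le> c i"
      using ab \<beta> unfolding c_def dual_cone_def by blast
    have "z = (\<lambda>p. \<Sum>i<NDrank T. c i * a i p)"
    proof
      fix p
      have "z p = (\<Sum>j\<in>UNIV. (\<Sum>i<NDrank T. a i p * b i j) * \<beta> j)"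
      proof -
        have "T p = (\<lambda>y. \<Sum>i<NDrank T. a i p * b i y)" using T by (metis (no_types))
        then show ?thesis using z unfolding matvec_def by simp
      qed
      also have "\<dots> = (\<Sum>j\<in>UNIV. \<Sum>i<NDrank T. a i p * b i j * \<beta> j)"
        by (simp add: sum_distrib_right)
      also have "\<dots> = (\<Sum>i<NDrank T. \<Sum>j\<in>UNIV. a i p * b i j * \<beta> j)"
        by (rule sum.swap)
      also have "\<dots> = (\<Sum>i<NDrank T. c i * a i p)"
        unfolding c_def by (simp add: sum_distrib_right sum_distrib_left mult_ac)
      finally show "z p = (\<Sum>i<NDrank T. c i * a i p)" .
    qed
    then show "z \<in> cone_of a (NDrank T)" unfolding cone_of_def using c0 by blast
  qed
  then show ?thesis using ab by (intro Least_le) blast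
qed

end
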